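(* Let $I$ be a countable set with $|I|\ge 2$, let $\mathfrak{M}_i=(S_i,\mathcal{L}_i)$ be partial linear spaces for $i\in I$, let $\mathfrak{M}=\bigotimes_{i\in I}\mathfrak{M}_i$ with point set $S=\prod_{i\in I}S_i$, and for each $i$ let $\mathcal{H}_i^{\mathrm{all}}$ denote the family consisting of all hyperplanes of $\mathfrak{M}_i$ together with the set $S_i$. For $\mathcal{H}\subseteq S$ the following are equivalent: (1) $\mathcal{H}$ is a hyperplane of $\mathfrak{M}$; (2) for all $a\in S$ and $i\in I$ we have $\mathcal{H}^{[a]}_i\in\mathcal{H}_i^{\mathrm{all}}$, and there exist $a\in S$, $i\in I$ with $\mathcal{H}^{[a]}_i\neq S_i$.
   Context: A partial linear space is a pair $(S,\mathcal{L})$ with $\mathcal{L}$ a family of subsets of $S$ (lines) such that every line has at least two points, every point lies on a line, and two distinct lines share at most one point. A subspace is a set $X$ such that any line meeting $X$ in at least two points is contained in $X$; a hyperplane is a proper subspace meeting every line. Segre product: for $a\in S=\prod_{i\in I}S_i$, $i\in I$ and $x\in S_i$, $a[i/x]$ denotes $a$ with its $i$-th coordinate replaced by $x$, and for $A\subseteq S_i$, $a[i/A]=\{a[i/x]:x\in A\}$. The Segre product $\bigotimes_{i\in I}\mathfrak{M}_i$ has point set $S$ and lines $a[i/l]$ for $a\in S$, $i\in I$, $l\in\mathcal{L}_i$. For $\mathcal{H}\subseteq S$, $a\in S$, $i\in I$: $\mathcal{H}^{[a]}_i=\{x\in S_i: a[i/x]\in\mathcal{H}\}$. *)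

theory Defs
  imports "HOL-Library.FuncSet" "HOL-Library.Countable_Set"
begin

definition partial_linear_space :: "'a set \<Rightarrow> 'a set set \<Rightarrow> bool" where
  "partial_linear_space S L \<longleftrightarrow>
     (\<forall>l\<in>L. l \<subseteq> S \<and> (\<exists>x y. x \<in> l \<and> y \<in> l \<and> x \<noteq> y)) \<and>
     (\<forall>p\<in>S. \<exists>l\<in>L. p \<in> l) \<and>
     (\<forall>l\<in>L. \<forall>m\<in>L. l \<noteq> m \<longrightarrow> (\<forall>x y. x \<in> l \<inter> m \<and> y \<in> l \<inter> m \<longrightarrow> x = y))"

definition subspace_pls :: "'a set \<Rightarrow> 'a set set \<Rightarrow> 'a set \<Rightarrow> bool" where
  "subspace_pls S L X \<longleftrightarrow> X \<subseteq> S \<and>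
     (\<forall>l\<in>L. (\<exists>x y. x \<noteq> y \<and> x \<in> l \<inter> X \<and> y \<in> l \<inter> X) \<longrightarrow> l \<subseteq> X)"

definition hyperplane_pls :: "'a set \<Rightarrow> 'a set set \<Rightarrow> 'a set \<Rightarrow> bool" where
  "hyperplane_pls S L H \<longleftrightarrow> subspace_pls S L H \<and> H \<noteq> S \<and> (\<forall>l\<in>L. l \<inter> H \<noteq> {})"

text \<open>Segre product: points are the (extensional) elements of PiE I S;
  lines are a[i/l] for a a point, i in I, l a line of the i-th factor.\<close>
definition segre_lines :: "'i set \<Rightarrow> ('i \<Rightarrow> 'a set) \<Rightarrow> ('i \<Rightarrow> 'a set set) \<Rightarrow> ('i \<Rightarrow> 'a) set set" where
  "segre_lines I S L = {(\<lambda>x. a(i := x)) ` l | a i l. a \<in> PiE I S \<and> i \<in> I \<and> l \<in> L i}"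

definition segre_section :: "('i \<Rightarrow> 'a set) \<Rightarrow> ('i \<Rightarrow> 'a) set \<Rightarrow> ('i \<Rightarrow> 'a) \<Rightarrow> 'i \<Rightarrow> 'a set" where
  "segre_section S H a i = {x \<in> S i. a(i := x) \<in> H}"

end

theory Submission
  imports Defs
begin

theorem theorem3p1:
  fixes I :: "'i set" and S :: "'i \<Rightarrow> 'a set" and L :: "'i \<Rightarrow> 'a set set"
    and H :: "('i \<Rightarrow> 'a) set"
  assumes "countable I"
    and "\<exists>i\<in>I. \<exists>j\<in>I. i \<noteq> j"
    and "\<forall>i\<in>I. partial_linear_space (S i) (L i)"
    and "H \<subseteq> PiE I S"
  shows "hyperplane_pls (PiE I S) (segre_lines I S L) H \<longleftrightarrow>
    ((\<forall>a\<in>PiE I S. \<forall>i\<in>I. hyperplane_pls (S i) (L i) (segre_section S H a i)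
                              \<or> segre_section S H a i = S i) \<and>
     (\<exists>a\<in>PiE I S. \<exists>i\<in>I. segre_section S H a i \<noteq> S i))"
proof
  have lsub: "\<And>i l. i \<in> I \<Longrightarrow> l \<in> L i \<Longrightarrow> l \<subseteq> S i \<and> l \<noteq> {}"
    using assms(3) unfolding partial_linear_space_def by blast
  have upd: "\<And>a i x. a \<in> PiE I S \<Longrightarrow> i \<in> I \<Longrightarrow> x \<in> S i \<Longrightarrow> a(i := x) \<in> PiE I S"
    by (auto simp: PiE_def Pi_def extensional_def)
  assume hp: "hyperplane_pls (PiE I S) (segre_lines I S L) H"
  show "(\<forall>a\<in>PiE I S. \<forall>i\<in>I. hyperplane_pls (S i) (L i) (segre_section S H a i)
                              \<or> segre_section S H a i = S i) \<and>
     (\<exists>a\<in>PiE I S. \<exists>i\<in>I. segre_section S H a i \<noteq> S i)"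
  proof
    show "\<forall>a\<in>PiE I S. \<forall>i\<in>I. hyperplane_pls (S i) (L i) (segre_section S H a i)
                              \<or> segre_section S H a i = S i"
    proof (intro ballI)
      fix a i assume a: "a \<in> PiE I S" and i: "i \<in> I"
      have lines: "\<And>l. l \<in> L i \<Longrightarrow> (\<lambda>x. a(i := x)) ` l \<in> segre_lines I S L"
        unfolding segre_lines_def using a i by blast
      have sub: "subspace_pls (S i) (L i) (segre_section S H a i)"
        unfolding subspace_pls_def
      proof (intro conjI ballI impI)
        show "segre_section S H a i \<subseteq> S i" by (auto simp: segre_section_def)
      next
        fix l assume l: "l \<in> L i" and ex: "\<exists>x y. x \<noteq> y \<and> x \<in> l \<inter> segre_section S H a i \<and> y \<in> l \<inter> segre_section S H a i"
        then obtain x y where xy: "x \<noteq> y" "x \<in> l" "y \<in> l" "a(i:=x) \<in> H" "a(i:=y) \<in> H"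
          by (auto simp: segre_section_def)
        have "a(i:=x) \<noteq> a(i:=y)" using xy(1) by (metis fun_upd_same)
        have hs: "\<forall>m\<in>segre_lines I S L. (\<exists>x y. x \<noteq> y \<and> x \<in> m \<inter> H \<and> y \<in> m \<inter> H) \<longrightarrow> m \<subseteq> H"
          using hp unfolding hyperplane_pls_def subspace_pls_def by (elim conjE)
        moreover have "\<exists>u v. u \<noteq> v \<and> u \<in> (\<lambda>x. a(i := x)) ` l \<inter> H \<and> v \<in> (\<lambda>x. a(i := x)) ` l \<inter> H"
          using \<open>a(i:=x) \<noteq> a(i:=y)\<close> xy by blast
        ultimately have "(\<lambda>x. a(i := x)) ` l \<subseteq> H"
          using lines[OF l] by blast
        thus "l \<subseteq> segre_section S H a i" using lsub[OF i l] unfolding segre_section_def by blast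
      qed
      have meet: "\<forall>l\<in>L i. l \<inter> segre_section S H a i \<noteq> {}"
      proof
        fix l assume l: "l \<in> L i"
        have "(\<lambda>x. a(i := x)) ` l \<inter> H \<noteq> {}" using hp lines[OF l] unfolding hyperplane_pls_def by (elim conjE) (rule bspec)
        then obtain x where "x \<in> l" "a(i:=x) \<in> H" by blast
        thus "l \<inter> segre_section S H a i \<noteq> {}" using lsub[OF i l] by (auto simp: segre_section_def)
      qed
      show "hyperplane_pls (S i) (L i) (segre_section S H a i) \<or> segre_section S H a i = S i"
        unfolding hyperplane_pls_def using sub meet by simp
    qed
  next
    obtain b where b: "b \<in> PiE I S" "b \<notin> H" using hp assms(4) unfolding hyperplane_pls_def by blast
    obtain i where i: "i \<in> I" using assms(2) by blast
    have "b i \<in> S i" using b i by auto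
    moreover have "b i \<notin> segre_section S H b i" using b by (simp add: segre_section_def)
    ultimately show "\<exists>a\<in>PiE I S. \<exists>i\<in>I. segre_section S H a i \<noteq> S i" using b i by blast
  qed
next
  have lsub: "\<And>i l. i \<in> I \<Longrightarrow> l \<in> L i \<Longrightarrow> l \<subseteq> S i \<and> l \<noteq> {}"
    using assms(3) unfolding partial_linear_space_def by blast
  assume r: "(\<forall>a\<in>PiE I S. \<forall>i\<in>I. hyperplane_pls (S i) (L i) (segre_section S H a i)
                              \<or> segre_section S H a i = S i) \<and>
     (\<exists>a\<in>PiE I S. \<exists>i\<in>I. segre_section S H a i \<noteq> S i)"
  have secsub: "\<And>a i. a \<in> PiE I S \<Longrightarrow> i \<in> I \<Longrightarrow> subspace_pls (S i) (L i) (segre_section S H a i)"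
  proof -
    fix a i assume a: "a \<in> PiE I S" and i: "i \<in> I"
    show "subspace_pls (S i) (L i) (segre_section S H a i)"
    proof (cases "segre_section S H a i = S i")
      case True thus ?thesis using lsub[OF i] unfolding subspace_pls_def by auto
    next
      case False thus ?thesis using r a i unfolding hyperplane_pls_def by blast
    qed
  qed
  have secmeet: "\<And>a i l. a \<in> PiE I S \<Longrightarrow> i \<in> I \<Longrightarrow> l \<in> L i \<Longrightarrow> l \<inter> segre_section S H a i \<noteq> {}"
  proof -
    fix a i l assume a: "a \<in> PiE I S" and i: "i \<in> I" and l: "l \<in> L i"
    show "l \<inter> segre_section S H a i \<noteq> {}"
    proof (cases "segre_section S H a i = S i")
      case True thus ?thesis using lsub[OF i l] by auto
    next
      case False thus ?thesis using r a i l unfolding hyperplane_pls_def by blast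
    qed
  qed
  show "hyperplane_pls (PiE I S) (segre_lines I S L) H"
    unfolding hyperplane_pls_def
  proof (intro conjI)
    show "subspace_pls (PiE I S) (segre_lines I S L) H"
      unfolding subspace_pls_def
    proof (intro conjI ballI impI)
      show "H \<subseteq> PiE I S" by (rule assms(4))
    next
      fix m assume m: "m \<in> segre_lines I S L"
        and ex: "\<exists>x y. x \<noteq> y \<and> x \<in> m \<inter> H \<and> y \<in> m \<inter> H"
      from m obtain a i l where ail: "a \<in> PiE I S" "i \<in> I" "l \<in> L i" "m = (\<lambda>x. a(i := x)) ` l"
        unfolding segre_lines_def by blast
      from ex ail obtain x y where xy: "x \<in> l" "y \<in> l" "a(i:=x) \<noteq> a(i:=y)" "a(i:=x) \<in> H" "a(i:=y) \<in> H"
        by blast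
      have "x \<noteq> y" using xy(3) by auto
      moreover have "x \<in> segre_section S H a i" "y \<in> segre_section S H a i"
        using xy lsub[OF ail(2,3)] by (auto simp: segre_section_def)
      ultimately have "l \<subseteq> segre_section S H a i"
        using secsub[OF ail(1,2)] ail(3) xy(1,2) unfolding subspace_pls_def by blast
      thus "m \<subseteq> H" using ail(4) by (auto simp: segre_section_def)
    qed
  next
    show "H \<noteq> PiE I S"
    proof
      assume e: "H = PiE I S"
      from r obtain a i where a: "a \<in> PiE I S" "i \<in> I" "segre_section S H a i \<noteq> S i" by blast
      have "segre_section S H a i = S i"
        using a(1,2) e by (auto simp: segre_section_def PiE_def Pi_def extensional_def)
      thus False using a(3) by blast
    qed
  next
    show "\<forall>m\<in>segre_lines I S L. m \<inter> H \<noteq> {}"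
    proof
      fix m assume m: "m \<in> segre_lines I S L"
      from m obtain a i l where ail: "a \<in> PiE I S" "i \<in> I" "l \<in> L i" "m = (\<lambda>x. a(i := x)) ` l"
        unfolding segre_lines_def by blast
      from secmeet[OF ail(1-3)] obtain x where "x \<in> l" "a(i:=x) \<in> H"
        by (auto simp: segre_section_def)
      thus "m \<inter> H \<noteq> {}" using ail(4) by blast
    qed
  qed
qed

end
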